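(* Let $X$ be a topological space, $\mathbb{F}$ a field, $k\ge 0$, and let $\mathcal{X}_G$ be a graph filtration of $X$ over a directed acyclic graph $G$. Then: (1) (Standard persistence) If $G$ is the path graph corresponding to a filtration $X_0 \to X_1 \to \cdots \to X_n$ and $I_{i,p}$ is the subgraph with vertices $X_i,\ldots,X_{i+p}$ (and the edges between consecutive ones), then $H_k^{I_{i,p}}(\mathcal{X}_G) \cong H_k^p(X_i)$, where $H_k^p(X_i)$ is the image of the map $H_k(X_i)\to H_k(X_{i+p})$ induced by inclusion. Furthermore, $\mathcal{PH}_k(\mathcal{X}_G)$ coincides with the (standard) persistence module of the filtration. (2) (Zigzag persistence) If $G$ is the graph of a zigzag diagram $\mathbb{X} = X_0 \leftrightarrow X_1 \leftrightarrow \cdots \leftrightarrow X_n$, where each arrow may point in either direction, then the zigzag module $H_k(\mathbb{X})$ (the diagram $H_k(X_0)\leftrightarrow \cdots \leftrightarrow H_k(X_n)$ of induced maps) is isomorphic to $\mathcal{PH}_k(\mathcal{X}_G)$. (3) (Multidimensional persistence) If $\mathcal{X} = \{X_v\}_{v\in\{0,\ldots,m\}^d}$ is a multifiltration with underlying graph $G$, and for $u\le v$ we let $G_{u,v}$ be the subgraph of $G$ on the vertices $\{w \in G : u \le w \le v\}$, then the rank invariant satisfies $\rho_{X,k}(u,v) = \dim H_k^{G_{u,v}}(\mathcal{X}_G)$.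
   Context: All homology is taken with coefficients in the field $\mathbb{F}$, so homology groups are vector spaces; they are assumed finitely generated. For a directed acyclic graph $G=(V,E)$, a graph filtration $\mathcal{X}_G$ of a space $X$ is a pair $(\{X_v\}_{v\in V},\{f_e\}_{e\in E})$ with $X_v\subset X$ and, for each edge $e=(v_1,v_2)$, $f_e:X_{v_1}\to X_{v_2}$ a continuous embedding (inclusion). For a connected subgraph $G'\subset G$, the $G'$-persistent homology group $H_k^{G'}(\mathcal{X}_G)$ is a vector space $\mathcal{P}$ of largest dimension equipped with injective linear maps $i_v:\mathcal{P}\to H_k(X_v)$ for all vertices $v$ of $G'$ such that $(f_e)_*\circ i_u = i_v$ for every edge $e=(u,v)$ of $G'$ (well defined up to isomorphism). A commutative $G$-module is a family of vector spaces $W_v$ ($v\in V$) and linear maps $W_u\to W_w$ for edges $(u,w)$ forming a commutative diagram; the persistence module $\mathcal{PH}_k(\mathcal{X}_G)$ is the commutative $G$-module $(\{H_k(X_v)\},\{(f_e)_*\})$. A multifiltration indexed by $\{0,\ldots,m\}^d$ is a family of spaces $X_v$ with inclusions $X_u\subset X_v$ whenever $u\le v$ in the componentwise partial order; its underlying graph has an edge from $u$ to each $u+e_i$ (for standard basis vectors $e_i$) in the grid. The rank invariant $\rho_{X,k}(u,v)$, for $u\le v$, is the dimension of the image of the map $H_k(X_u)\to H_k(X_v)$ induced by inclusion. *)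

theory Defs
  imports "HOL-Homology.Homology"
begin

text \<open>HOL-Homology only provides integer coefficients, so singular chains with
coefficients in a field 'k are introduced here, reusing the library notions of
singular simplex and singular face.\<close>

type_synonym ('a, 'k) fchain = "((nat \<Rightarrow> real) \<Rightarrow> 'a) \<Rightarrow>\<^sub>0 'k"

definition fscale :: "'k::field \<Rightarrow> ('a, 'k) fchain \<Rightarrow> ('a, 'k) fchain" where
  "fscale a c = Poly_Mapping.map (\<lambda>x. a * x) c"

definition fchain_on :: "nat \<Rightarrow> 'a topology \<Rightarrow> ('a, 'k::field) fchain \<Rightarrow> bool" where
  "fchain_on p T c \<longleftrightarrow> (\<forall>f \<in> Poly_Mapping.keys c. singular_simplex p T f)"

definition fboundary :: "nat \<Rightarrow> ('a, 'k::field) fchain \<Rightarrow> ('a, 'k) fchain" where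
  "fboundary p c =
     (if p = 0 then 0 else
      (\<Sum>f \<in> Poly_Mapping.keys c. \<Sum>j\<le>p.
          Poly_Mapping.single (singular_face p j f) ((-1) ^ j * Poly_Mapping.lookup c f)))"

definition fcycles :: "nat \<Rightarrow> 'a topology \<Rightarrow> ('a, 'k::field) fchain set" where
  "fcycles p T = {c. fchain_on p T c \<and> fboundary p c = 0}"

definition fboundaries :: "nat \<Rightarrow> 'a topology \<Rightarrow> ('a, 'k::field) fchain set" where
  "fboundaries p T = {fboundary (Suc p) d | d. fchain_on (Suc p) T d}"

definition hclass :: "nat \<Rightarrow> 'a topology \<Rightarrow> ('a, 'k::field) fchain \<Rightarrow> ('a, 'k) fchain set" where
  "hclass p T z = {z + b | b. b \<in> fboundaries p T}"

definition hgroup :: "nat \<Rightarrow> 'a topology \<Rightarrow> 'a set \<Rightarrow> ('a, 'k::field) fchain set set" where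
  "hgroup p X S = {hclass p (subtopology X S) z | z. z \<in> fcycles p (subtopology X S)}"

definition hinduced :: "nat \<Rightarrow> 'a topology \<Rightarrow> 'a set \<Rightarrow> 'a set
     \<Rightarrow> ('a, 'k::field) fchain set \<Rightarrow> ('a, 'k) fchain set" where
  "hinduced p X S S' C = hclass p (subtopology X S') (SOME z. z \<in> C)"

definition fg_homology :: "nat \<Rightarrow> 'a topology \<Rightarrow> 'a set \<Rightarrow> 'k::field itself \<Rightarrow> bool" where
  "fg_homology p X S _ \<longleftrightarrow>
     (\<exists>F :: ('a,'k) fchain set. finite F \<and> F \<subseteq> fcycles p (subtopology X S) \<and>
        fcycles p (subtopology X S) \<subseteq> module.span fscale (F \<union> fboundaries p (subtopology X S)))"

text \<open>Dimension of the image of H_p(S) \<rightarrow> H_p(S') (S \<subseteq> S'), i.e. of the subspace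
(Z_p(S) + B_p(S'))/B_p(S') of H_p(S'): the least number of cycles of S spanning
Z_p(S) modulo B_p(S').\<close>
definition hrank :: "nat \<Rightarrow> 'a topology \<Rightarrow> 'a set \<Rightarrow> 'a set \<Rightarrow> 'k::field itself \<Rightarrow> nat" where
  "hrank p X S S' _ =
     (LEAST n. \<exists>F :: ('a,'k) fchain set. finite F \<and> card F = n \<and> F \<subseteq> fcycles p (subtopology X S) \<and>
        fcycles p (subtopology X S) \<subseteq> module.span fscale (F \<union> fboundaries p (subtopology X S')))"

definition graph_filtration :: "'a topology \<Rightarrow> 'v set \<Rightarrow> ('v \<times> 'v) set \<Rightarrow> ('v \<Rightarrow> 'a set) \<Rightarrow> bool" where
  "graph_filtration X V E Xs \<longleftrightarrow>
     (\<forall>v\<in>V. Xs v \<subseteq> topspace X) \<and> (\<forall>(u,w)\<in>E. u \<in> V \<and> w \<in> V \<and> Xs u \<subseteq> Xs w)"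

text \<open>A linear map i from the vector space P (a subspace of the chain space, scalar
multiplication fscale) into H_p(S), given by choosing a representing cycle i x
of the class of each x: linearity and injectivity hold modulo boundaries.\<close>
definition hlinear_inj :: "nat \<Rightarrow> 'a topology \<Rightarrow> 'a set \<Rightarrow> ('a, 'k::field) fchain set
     \<Rightarrow> (('a, 'k) fchain \<Rightarrow> ('a, 'k) fchain) \<Rightarrow> bool" where
  "hlinear_inj p X S P i \<longleftrightarrow>
     (let B = fboundaries p (subtopology X S) in
       (\<forall>x\<in>P. i x \<in> fcycles p (subtopology X S)) \<and>
       (\<forall>x\<in>P. \<forall>y\<in>P. i (x + y) - (i x + i y) \<in> B) \<and>
       (\<forall>a. \<forall>x\<in>P. i (fscale a x) - fscale a (i x) \<in> B) \<and>
       (\<forall>x\<in>P. \<forall>y\<in>P. i x - i y \<in> B \<longrightarrow> x = y))"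

text \<open>(P, (i_v)) is a compatible family over the subgraph (V', E'): injective linear
maps i_v : P \<rightarrow> H_p(X_v) with (f_e)_* \<circ> i_u = i_v for e = (u,v) \<in> E'.\<close>
definition compatible_family :: "nat \<Rightarrow> 'a topology \<Rightarrow> ('v \<Rightarrow> 'a set) \<Rightarrow> 'v set \<Rightarrow> ('v \<times> 'v) set
     \<Rightarrow> ('a, 'k::field) fchain set \<Rightarrow> ('v \<Rightarrow> ('a, 'k) fchain \<Rightarrow> ('a, 'k) fchain) \<Rightarrow> bool" where
  "compatible_family p X Xs V' E' P i \<longleftrightarrow>
     module.subspace fscale P \<and>
     (\<forall>v\<in>V'. hlinear_inj p X (Xs v) P (i v)) \<and>
     (\<forall>(u,v)\<in>E'. \<forall>x\<in>P. i u x - i v x \<in> fboundaries p (subtopology X (Xs v)))"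

definition persistent_group :: "nat \<Rightarrow> 'a topology \<Rightarrow> ('v \<Rightarrow> 'a set) \<Rightarrow> 'v set \<Rightarrow> ('v \<times> 'v) set
     \<Rightarrow> ('a, 'k::field) fchain set \<Rightarrow> ('v \<Rightarrow> ('a, 'k) fchain \<Rightarrow> ('a, 'k) fchain) \<Rightarrow> bool" where
  "persistent_group p X Xs V' E' P i \<longleftrightarrow>
     compatible_family p X Xs V' E' P i \<and>
     (\<forall>(P' :: ('a, 'k) fchain set) (i' :: 'v \<Rightarrow> ('a, 'k) fchain \<Rightarrow> ('a, 'k) fchain).
         compatible_family p X Xs V' E' P' i' \<longrightarrow>
         vector_space.dim fscale P' \<le> vector_space.dim fscale P)"

definition PH_module :: "nat \<Rightarrow> 'a topology \<Rightarrow> ('v \<Rightarrow> 'a set) \<Rightarrow> 'v set \<Rightarrow> ('v \<times> 'v) set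
     \<Rightarrow> ('v \<Rightarrow> ('a, 'k::field) fchain set set) \<times>
        ('v \<times> 'v \<Rightarrow> ('a, 'k) fchain set \<Rightarrow> ('a, 'k) fchain set)" where
  "PH_module p X Xs V E =
     (\<lambda>v. if v \<in> V then hgroup p X (Xs v) else {},
      \<lambda>(u,w). if (u,w) \<in> E then hinduced p X (Xs u) (Xs w) else (\<lambda>C. C))"

definition path_edges :: "nat \<Rightarrow> (nat \<times> nat) set" where
  "path_edges n = {(j, Suc j) | j. j < n}"

definition std_persistence_module :: "nat \<Rightarrow> 'a topology \<Rightarrow> (nat \<Rightarrow> 'a set) \<Rightarrow> nat
     \<Rightarrow> (nat \<Rightarrow> ('a, 'k::field) fchain set set) \<times>
        (nat \<times> nat \<Rightarrow> ('a, 'k) fchain set \<Rightarrow> ('a, 'k) fchain set)" where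
  "std_persistence_module p X Xs n =
     (\<lambda>j. if j \<le> n then hgroup p X (Xs j) else {},
      \<lambda>(a,b). if b = Suc a \<and> a < n then hinduced p X (Xs a) (Xs b) else (\<lambda>C. C))"

text \<open>Zigzag X_0 \<leftrightarrow> ... \<leftrightarrow> X_n: dir j means the arrow X_j \<rightarrow> X_(j+1), otherwise X_(j+1) \<rightarrow> X_j.\<close>
definition zigzag_edges :: "nat \<Rightarrow> (nat \<Rightarrow> bool) \<Rightarrow> (nat \<times> nat) set" where
  "zigzag_edges n dir = {(j, Suc j) | j. j < n \<and> dir j} \<union> {(Suc j, j) | j. j < n \<and> \<not> dir j}"

definition zigzag_module :: "nat \<Rightarrow> 'a topology \<Rightarrow> (nat \<Rightarrow> 'a set) \<Rightarrow> nat \<Rightarrow> (nat \<Rightarrow> bool)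
     \<Rightarrow> (nat \<Rightarrow> ('a, 'k::field) fchain set set) \<times>
        (nat \<times> nat \<Rightarrow> ('a, 'k) fchain set \<Rightarrow> ('a, 'k) fchain set)" where
  "zigzag_module p X Xs n dir =
     (\<lambda>j. if j \<le> n then hgroup p X (Xs j) else {},
      \<lambda>(a,b). if b = Suc a \<and> a < n \<and> dir a then hinduced p X (Xs a) (Xs b)
              else if a = Suc b \<and> b < n \<and> \<not> dir b then hinduced p X (Xs a) (Xs b)
              else (\<lambda>C. C))"

text \<open>Grid points are functions nat \<Rightarrow> nat vanishing from index d on; the order is
the componentwise order (le_fun).\<close>
definition grid :: "nat \<Rightarrow> nat \<Rightarrow> (nat \<Rightarrow> nat) set" where
  "grid d m = {v. (\<forall>i<d. v i \<le> m) \<and> (\<forall>i\<ge>d. v i = 0)}"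

definition grid_edges :: "nat \<Rightarrow> nat \<Rightarrow> ((nat \<Rightarrow> nat) \<times> (nat \<Rightarrow> nat)) set" where
  "grid_edges d m = {(u, u(i := Suc (u i))) | u i. u \<in> grid d m \<and> i < d \<and> u i < m}"

definition multifiltration :: "'a topology \<Rightarrow> nat \<Rightarrow> nat \<Rightarrow> ((nat \<Rightarrow> nat) \<Rightarrow> 'a set) \<Rightarrow> bool" where
  "multifiltration X d m Xs \<longleftrightarrow>
     (\<forall>v\<in>grid d m. Xs v \<subseteq> topspace X) \<and>
     (\<forall>u\<in>grid d m. \<forall>v\<in>grid d m. u \<le> v \<longrightarrow> Xs u \<subseteq> Xs v)"

definition box_vertices :: "nat \<Rightarrow> nat \<Rightarrow> (nat \<Rightarrow> nat) \<Rightarrow> (nat \<Rightarrow> nat) \<Rightarrow> (nat \<Rightarrow> nat) set" where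
  "box_vertices d m u v = {w \<in> grid d m. u \<le> w \<and> w \<le> v}"

definition box_edges :: "nat \<Rightarrow> nat \<Rightarrow> (nat \<Rightarrow> nat) \<Rightarrow> (nat \<Rightarrow> nat) \<Rightarrow> ((nat \<Rightarrow> nat) \<times> (nat \<Rightarrow> nat)) set" where
  "box_edges d m u v = {e \<in> grid_edges d m. fst e \<in> box_vertices d m u v \<and> snd e \<in> box_vertices d m u v}"

end

theory Submission
  imports Defs
begin

lemma lookup_fscale[simp]: "Poly_Mapping.lookup (fscale a c) x = a * Poly_Mapping.lookup c x"
  unfolding fscale_def by (simp add: Poly_Mapping.map.rep_eq when_def)
interpretation fs: vector_space "fscale :: 'k::field \<Rightarrow> ('a,'k) fchain \<Rightarrow> _"
  by unfold_locales (auto simp: poly_mapping_eq_iff fun_eq_iff lookup_add algebra_simps)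

lemma keys_fscale: "Poly_Mapping.keys (fscale a c) \<subseteq> Poly_Mapping.keys c"
  by (auto simp: in_keys_iff)

lemma fscale_single[simp]: "fscale a (Poly_Mapping.single x b) = Poly_Mapping.single x (a * b)"
  by (simp add: poly_mapping_eq_iff fun_eq_iff lookup_single when_def)

lemma fchain_on_mono:
  "S \<subseteq> S' \<Longrightarrow> fchain_on p (subtopology X S) c \<Longrightarrow> fchain_on p (subtopology X S') c"
  unfolding fchain_on_def singular_simplex_subtopology by blast

lemma fchain_on_0[simp]: "fchain_on p T 0"
  by (simp add: fchain_on_def)

lemma fchain_on_add: "fchain_on p T c \<Longrightarrow> fchain_on p T d \<Longrightarrow> fchain_on p T (c + d)"
  proof -
  assume c: "fchain_on p T c" and d: "fchain_on p T d"
  show ?thesis unfolding fchain_on_def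
  proof
    fix f assume "f \<in> Poly_Mapping.keys (c + d)"
    then have "f \<in> Poly_Mapping.keys c \<or> f \<in> Poly_Mapping.keys d" using keys_add[of c d] by blast
    then show "singular_simplex p T f" using c d unfolding fchain_on_def by blast
  qed
qed

lemma fchain_on_scale: "fchain_on p T c \<Longrightarrow> fchain_on p T (fscale a c)"
  proof -
  assume c: "fchain_on p T c"
  show ?thesis unfolding fchain_on_def
  proof
    fix f assume "f \<in> Poly_Mapping.keys (fscale a c)"
    then have "f \<in> Poly_Mapping.keys c" using keys_fscale[of a c] by blast
    then show "singular_simplex p T f" using c unfolding fchain_on_def by blast
  qed
qed

lemma fboundary_alt:
  assumes "finite K" "Poly_Mapping.keys c \<subseteq> K"
  shows "fboundary p c = (if p = 0 then 0 else
      (\<Sum>f \<in> K. \<Sum>j\<le>p. Poly_Mapping.single (singular_face p j f) ((-1) ^ j * Poly_Mapping.lookup c f)))"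
proof -
  have "(\<Sum>f \<in> K. \<Sum>j\<le>p. Poly_Mapping.single (singular_face p j f) ((-1) ^ j * Poly_Mapping.lookup c f))
     = (\<Sum>f \<in> Poly_Mapping.keys c. \<Sum>j\<le>p. Poly_Mapping.single (singular_face p j f) ((-1) ^ j * Poly_Mapping.lookup c f))"
    by (rule sum.mono_neutral_right[OF assms(1) assms(2)]) (auto simp: in_keys_iff)
  then show ?thesis by (simp add: fboundary_def)
qed

lemma fboundary_add: "fboundary p (c + d) = fboundary p c + fboundary p d"
proof -
  let ?K = "Poly_Mapping.keys c \<union> Poly_Mapping.keys d"
  have k: "Poly_Mapping.keys (c + d) \<subseteq> ?K" by (rule keys_add)
  show ?thesis
    apply (simp add: fboundary_alt[OF _ k] fboundary_alt[of ?K c] fboundary_alt[of ?K d])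
    apply (simp add: lookup_add distrib_left single_add sum.distrib)
    done
qed

lemma fboundary_scale: "fboundary p (fscale a c) = fscale a (fboundary p c)"
proof -
  have k: "Poly_Mapping.keys (fscale a c) \<subseteq> Poly_Mapping.keys c" by (rule keys_fscale)
  show ?thesis
    apply (simp add: fboundary_alt[OF _ k] fboundary_alt[of "Poly_Mapping.keys c" c])
    apply (simp add: fs.scale_sum_right mult.left_commute)
    done
qed

lemma fboundary_0[simp]: "fboundary p 0 = 0"
  by (simp add: fboundary_def)

lemma subspace_fcycles: "fs.subspace (fcycles p T)"
  unfolding fs.subspace_def fcycles_def
  by (auto simp: fchain_on_add fchain_on_scale fboundary_add fboundary_scale)

lemma subspace_fboundaries: "fs.subspace (fboundaries p T)"
  unfolding fs.subspace_def fboundaries_def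
  apply (intro conjI)
    apply (rule CollectI, rule exI[of _ 0], simp)
   apply (clarsimp; metis fboundary_add fchain_on_add)
  apply (clarsimp; metis fboundary_scale fchain_on_scale)
  done

lemma fcycles_mono: "S \<subseteq> S' \<Longrightarrow> fcycles p (subtopology X S) \<subseteq> fcycles p (subtopology X S')"
  unfolding fcycles_def using fchain_on_mono by blast

lemma fboundaries_mono: "S \<subseteq> S' \<Longrightarrow> fboundaries p (subtopology X S) \<subseteq> fboundaries p (subtopology X S')"
  unfolding fboundaries_def using fchain_on_mono by blast


lemma min_indep:
  fixes B :: "('a,'k::field) fchain set"
  assumes B: "fs.subspace B" and fin: "finite Fm" and Z: "Z \<subseteq> fs.span (Fm \<union> B)"
    and min: "\<And>F'. F' \<subseteq> Fm \<Longrightarrow> Z \<subseteq> fs.span (F' \<union> B) \<Longrightarrow> card Fm \<le> card F'"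
    and su: "(\<Sum>f\<in>Fm. fscale (u f) f) \<in> B"
  shows "\<forall>f\<in>Fm. u f = 0"
proof (rule ccontr)
  assume "\<not> ?thesis"
  then obtain g where g: "g \<in> Fm" "u g \<noteq> 0" by blast
  define F' where "F' = Fm - {g}"
  have sumeq: "(\<Sum>f\<in>Fm. fscale (u f) f) = fscale (u g) g + (\<Sum>f\<in>F'. fscale (u f) f)"
    unfolding F'_def using fin g(1) by (simp add: sum.remove)
  have s1: "(\<Sum>f\<in>Fm. fscale (u f) f) \<in> fs.span (F' \<union> B)"
    using su fs.span_superset by blast
  have s2: "(\<Sum>f\<in>F'. fscale (u f) f) \<in> fs.span (F' \<union> B)"
    by (intro fs.span_sum fs.span_scale) (auto intro: fs.span_base)
  have "fscale (u g) g \<in> fs.span (F' \<union> B)"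
    using fs.span_diff[OF s1 s2] sumeq by simp
  then have "fscale (inverse (u g)) (fscale (u g) g) \<in> fs.span (F' \<union> B)"
    by (rule fs.span_scale)
  then have gin: "g \<in> fs.span (F' \<union> B)" using g(2) by simp
  have "Fm \<union> B \<subseteq> fs.span (F' \<union> B)"
    using gin by (auto simp: F'_def intro: fs.span_base)
  then have "fs.span (Fm \<union> B) \<subseteq> fs.span (F' \<union> B)"
    by (simp add: fs.span_minimal)
  with Z have "card Fm \<le> card F'" by (intro min) (auto simp: F'_def)
  moreover have "card F' < card Fm" unfolding F'_def by (rule card_Diff1_less[OF fin g(1)])
  ultimately show False by simp
qed

lemma indep_bound:
  fixes B :: "('a,'k::field) fchain set"
  assumes B: "fs.subspace B" and fin: "finite Fm" and finS: "finite S"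
    and h: "\<And>x. x \<in> S \<Longrightarrow> h x \<in> fs.span (Fm \<union> B)"
    and ind: "\<And>c. (\<Sum>x\<in>S. fscale (c x) (h x)) \<in> B \<Longrightarrow> \<forall>x\<in>S. c x = 0"
  shows "card S \<le> card Fm"
proof -
  have ex: "\<exists>g. g \<in> fs.span Fm \<and> h x - g \<in> B" if "x \<in> S" for x
  proof -
    from h[OF that] obtain a b where "h x = a + b" "a \<in> fs.span Fm" "b \<in> fs.span B"
      unfolding fs.span_Un by blast
    moreover have "fs.span B = B" using B by simp
    ultimately show ?thesis by (intro exI[of _ a]) simp
  qed
  have "\<forall>x\<in>S. \<exists>g. g \<in> fs.span Fm \<and> h x - g \<in> B" using ex by blast
  then have "\<exists>g. \<forall>x\<in>S. g x \<in> fs.span Fm \<and> h x - g x \<in> B" by (rule bchoice)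
  then obtain g where g0: "\<forall>x\<in>S. g x \<in> fs.span Fm \<and> h x - g x \<in> B" by blast
  have g: "g x \<in> fs.span Fm \<and> h x - g x \<in> B" if "x \<in> S" for x using g0 that by blast
  have gind: "\<forall>x\<in>S. c x = 0" if c: "(\<Sum>x\<in>S. fscale (c x) (g x)) = 0" for c
  proof (rule ind)
    have "(\<Sum>x\<in>S. fscale (c x) (h x)) = (\<Sum>x\<in>S. fscale (c x) (h x - g x)) + (\<Sum>x\<in>S. fscale (c x) (g x))"
      by (simp add: fs.scale_right_diff_distrib sum_subtractf)
    also have "\<dots> = (\<Sum>x\<in>S. fscale (c x) (h x - g x))" using c by simp
    also have "\<dots> \<in> B" using g by (intro fs.subspace_sum[OF B] fs.subspace_scale[OF B]) auto
    finally show "(\<Sum>x\<in>S. fscale (c x) (h x)) \<in> B" .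
  qed
  have inj: "inj_on g S"
  proof (rule inj_onI, rule ccontr)
    fix x y assume xy: "x \<in> S" "y \<in> S" "g x = g y" "x \<noteq> y"
    define c where "c z = (if z = x then 1 else if z = y then -1 else (0::'k))" for z
    have "(\<Sum>z\<in>S. fscale (c z) (g z)) = (\<Sum>z\<in>{x,y}. fscale (c z) (g z))"
      by (rule sum.mono_neutral_right) (use finS xy in \<open>auto simp: c_def\<close>)
    also have "\<dots> = 0" using xy by (simp add: c_def)
    finally have "\<forall>z\<in>S. c z = 0" by (rule gind)
    then have "c x = 0" using xy(1) by blast
    then show False by (simp add: c_def)
  qed
  have "fs.independent (g ` S)"
  proof
    assume "fs.dependent (g ` S)"
    have fin': "finite (g ` S)" using finS by simp
    have "\<exists>u. (\<exists>v\<in>g ` S. u v \<noteq> 0) \<and> (\<Sum>v\<in>g ` S. fscale (u v) v) = 0"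
      by (rule iffD1[OF fs.dependent_finite[OF fin'] \<open>fs.dependent (g ` S)\<close>])
    then obtain u where u: "\<exists>v\<in>g ` S. u v \<noteq> 0" "(\<Sum>v\<in>g ` S. fscale (u v) v) = 0"
      by blast
    then have "(\<Sum>x\<in>S. fscale (u (g x)) (g x)) = 0" by (simp add: sum.reindex[OF inj])
    then have "\<forall>x\<in>S. u (g x) = 0" by (rule gind)
    with u(1) show False by auto
  qed
  moreover have "g ` S \<subseteq> fs.span Fm" using g by auto
  ultimately have "card (g ` S) \<le> card Fm" using fs.independent_span_bound[OF fin] by blast
  then show ?thesis using card_image[OF inj] by simp
qed

lemma hlinD:
  assumes "hlinear_inj p X S P i"
  shows "x \<in> P \<Longrightarrow> i x \<in> fcycles p (subtopology X S)"
    and "x \<in> P \<Longrightarrow> y \<in> P \<Longrightarrow> i (x + y) - (i x + i y) \<in> fboundaries p (subtopology X S)"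
    and "x \<in> P \<Longrightarrow> i (fscale a x) - fscale a (i x) \<in> fboundaries p (subtopology X S)"
    and "x \<in> P \<Longrightarrow> y \<in> P \<Longrightarrow> i x - i y \<in> fboundaries p (subtopology X S) \<Longrightarrow> x = y"
proof -
  have H: "(\<forall>x\<in>P. i x \<in> fcycles p (subtopology X S)) \<and>
       (\<forall>x\<in>P. \<forall>y\<in>P. i (x + y) - (i x + i y) \<in> fboundaries p (subtopology X S)) \<and>
       (\<forall>a. \<forall>x\<in>P. i (fscale a x) - fscale a (i x) \<in> fboundaries p (subtopology X S)) \<and>
       (\<forall>x\<in>P. \<forall>y\<in>P. i x - i y \<in> fboundaries p (subtopology X S) \<longrightarrow> x = y)"
    using assms unfolding hlinear_inj_def Let_def .
  show "x \<in> P \<Longrightarrow> i x \<in> fcycles p (subtopology X S)" using H by (elim conjE) (rule bspec)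
  show "x \<in> P \<Longrightarrow> y \<in> P \<Longrightarrow> i (x + y) - (i x + i y) \<in> fboundaries p (subtopology X S)"
    using H by (elim conjE) (rule bspec, rule bspec)
  show "x \<in> P \<Longrightarrow> i (fscale a x) - fscale a (i x) \<in> fboundaries p (subtopology X S)"
    using H by (elim conjE) (rule bspec, rule spec)
  show "x \<in> P \<Longrightarrow> y \<in> P \<Longrightarrow> i x - i y \<in> fboundaries p (subtopology X S) \<Longrightarrow> x = y"
    using H by (elim conjE) (rule mp, rule bspec, rule bspec)
qed

lemma hlin_zero:
  assumes "hlinear_inj p X S P i" "fs.subspace P"
  shows "i 0 \<in> fboundaries p (subtopology X S)"
proof -
  have "0 \<in> P" using assms(2) by (simp add: fs.subspace_def)
  have "i (0 + 0) - (i 0 + i 0) \<in> fboundaries p (subtopology X S)"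
    by (rule hlinD(2)[OF assms(1) \<open>0 \<in> P\<close> \<open>0 \<in> P\<close>])
  then have "- (i 0) \<in> fboundaries p (subtopology X S)" by simp
  then show ?thesis using fs.subspace_neg[OF subspace_fboundaries] by fastforce
qed

lemma grp_eq: "(a::'b::ab_group_add) - (p + q) = (a - (b + c)) + (b - p) + (c - q)"
  by (simp add: algebra_simps)

lemma hlin_sum:
  assumes hl: "hlinear_inj p X S P i" and P: "fs.subspace P" and fin: "finite A"
    and xP: "\<forall>a\<in>A. x a \<in> P"
  shows "i (\<Sum>a\<in>A. fscale (c a) (x a)) - (\<Sum>a\<in>A. fscale (c a) (i (x a))) \<in> fboundaries p (subtopology X S)"
  using fin xP
proof (induction A rule: finite_induct)
  case empty
  then show ?case using hlin_zero[OF hl P] by simp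
next
  case (insert a A)
  let ?B = "fboundaries p (subtopology X S)"
  have BS: "fs.subspace ?B" by (rule subspace_fboundaries)
  let ?y = "fscale (c a) (x a)" and ?r = "\<Sum>a\<in>A. fscale (c a) (x a)"
  have yP: "?y \<in> P" using insert P by (simp add: fs.subspace_scale)
  have rP: "?r \<in> P" using insert P by (simp add: fs.subspace_sum fs.subspace_scale)
  have h1: "i (?y + ?r) - (i ?y + i ?r) \<in> ?B" by (rule hlinD(2)[OF hl yP rP])
  have h2: "i ?y - fscale (c a) (i (x a)) \<in> ?B" using insert by (intro hlinD(3)[OF hl]) simp
  have h3: "i ?r - (\<Sum>a\<in>A. fscale (c a) (i (x a))) \<in> ?B" using insert by simp
  have "i (?y + ?r) - (fscale (c a) (i (x a)) + (\<Sum>a\<in>A. fscale (c a) (i (x a))))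
      = (i (?y + ?r) - (i ?y + i ?r)) + (i ?y - fscale (c a) (i (x a))) + (i ?r - (\<Sum>a\<in>A. fscale (c a) (i (x a))))"
    by (rule grp_eq)
  also have "\<dots> \<in> ?B" using h1 h2 h3 BS by (intro fs.subspace_add) auto
  finally show ?case using insert by simp
qed


lemma zeroB: "0 \<in> fboundaries p T"
  by (rule fs.subspace_0, rule subspace_fboundaries)

lemma compD:
  assumes "compatible_family p X Xs V' E' P i"
  shows "fs.subspace P"
    and "v \<in> V' \<Longrightarrow> hlinear_inj p X (Xs v) P (i v)"
    and "(u, v) \<in> E' \<Longrightarrow> x \<in> P \<Longrightarrow> i u x - i v x \<in> fboundaries p (subtopology X (Xs v))"
proof -
  have H: "fs.subspace P \<and> (\<forall>v\<in>V'. hlinear_inj p X (Xs v) P (i v)) \<and>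
     (\<forall>(u,v)\<in>E'. \<forall>x\<in>P. i u x - i v x \<in> fboundaries p (subtopology X (Xs v)))"
    using assms unfolding compatible_family_def .
  show "fs.subspace P" using H by (rule conjunct1)
  show "v \<in> V' \<Longrightarrow> hlinear_inj p X (Xs v) P (i v)" using H by (elim conjE) (rule bspec)
  show "(u, v) \<in> E' \<Longrightarrow> x \<in> P \<Longrightarrow> i u x - i v x \<in> fboundaries p (subtopology X (Xs v))"
  proof -
    assume uv: "(u, v) \<in> E'" and x: "x \<in> P"
    have "\<forall>(u,v)\<in>E'. \<forall>x\<in>P. i u x - i v x \<in> fboundaries p (subtopology X (Xs v))" using H by simp
    then have "case (u, v) of (u, v) \<Rightarrow> \<forall>x\<in>P. i u x - i v x \<in> fboundaries p (subtopology X (Xs v))"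
      using uv by (rule bspec)
    then show ?thesis using x by simp
  qed
qed

lemma reach_diff:
  assumes cf: "compatible_family p X Xs V' E' P i" and EV: "E' \<subseteq> V' \<times> V'"
    and Bt: "\<And>w. w \<in> V' \<Longrightarrow> Xs w \<subseteq> Xs t"
    and r: "(s, w) \<in> E'\<^sup>*" and x: "x \<in> P"
  shows "i s x - i w x \<in> fboundaries p (subtopology X (Xs t))"
  using r
proof (induction rule: rtrancl_induct)
  case base
  then show ?case by (simp add: zeroB)
next
  case (step y z)
  have zV: "z \<in> V'" using step(2) EV by auto
  have "i y x - i z x \<in> fboundaries p (subtopology X (Xs z))" by (rule compD(3)[OF cf step(2) x])
  also have "\<dots> \<subseteq> fboundaries p (subtopology X (Xs t))" by (rule fboundaries_mono[OF Bt[OF zV]])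
  finally have a: "i y x - i z x \<in> fboundaries p (subtopology X (Xs t))" .
  have "i s x - i z x = (i s x - i y x) + (i y x - i z x)" by simp
  also have "\<dots> \<in> fboundaries p (subtopology X (Xs t))"
    by (rule fs.subspace_add[OF subspace_fboundaries step(3) a])
  finally show ?case .
qed


lemma core:
  fixes Xs :: "'v \<Rightarrow> 'a set" and F :: "'k::field itself" and X :: "'a topology"
  assumes sV: "s \<in> V'" and tV: "t \<in> V'"
    and mono: "\<And>w. w \<in> V' \<Longrightarrow> Xs s \<subseteq> Xs w \<and> Xs w \<subseteq> Xs t"
    and EV: "E' \<subseteq> V' \<times> V'" and reach: "(s,t) \<in> E'\<^sup>*"
    and fg: "fg_homology k X (Xs s) F"
  shows "(\<exists>(P::('a,'k) fchain set) ii. persistent_group k X Xs V' E' P ii) \<and>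
         (\<forall>(P::('a,'k) fchain set) ii. persistent_group k X Xs V' E' P ii \<longrightarrow>
             vector_space.dim fscale P = hrank k X (Xs s) (Xs t) F)"
proof -
  define Zs :: "('a,'k) fchain set" where "Zs = fcycles k (subtopology X (Xs s))"
  define Bt :: "('a,'k) fchain set" where "Bt = fboundaries k (subtopology X (Xs t))"
  define Q where "Q n \<longleftrightarrow> (\<exists>Fs::('a,'k) fchain set. finite Fs \<and> card Fs = n \<and> Fs \<subseteq> Zs \<and> Zs \<subseteq> fs.span (Fs \<union> Bt))" for n
  have r_def: "hrank k X (Xs s) (Xs t) F = (LEAST n. Q n)"
    unfolding hrank_def Q_def Zs_def Bt_def ..
  have BtS: "fs.subspace Bt" unfolding Bt_def by (rule subspace_fboundaries)
  have Bmono: "fboundaries k (subtopology X (Xs w)) \<subseteq> Bt" if "w \<in> V'" for w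
    unfolding Bt_def by (rule fboundaries_mono) (use mono[OF that] in simp)
  have Zmono: "Zs \<subseteq> fcycles k (subtopology X (Xs w))" if "w \<in> V'" for w
    unfolding Zs_def by (rule fcycles_mono) (use mono[OF that] in simp)
  have Bs: "fboundaries k (subtopology X (Xs s)) \<subseteq> Bt" by (rule Bmono[OF sV])
  have BtV: "Bt = fboundaries k (subtopology X (Xs t))" by (simp add: Bt_def)
  obtain F0 :: "('a,'k) fchain set" where F0: "finite F0" "F0 \<subseteq> Zs"
      "Zs \<subseteq> fs.span (F0 \<union> fboundaries k (subtopology X (Xs s)))"
    using fg unfolding fg_homology_def Zs_def by blast
  have "fs.span (F0 \<union> fboundaries k (subtopology X (Xs s))) \<subseteq> fs.span (F0 \<union> Bt)"
    by (rule fs.span_mono) (use Bs in blast)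
  with F0 have "Q (card F0)" unfolding Q_def by blast
  then have "Q (LEAST n. Q n)" by (rule LeastI)
  then obtain Fm where Fm: "finite Fm" "card Fm = (LEAST n. Q n)" "Fm \<subseteq> Zs" "Zs \<subseteq> fs.span (Fm \<union> Bt)"
    unfolding Q_def by blast
  have minF: "card Fm \<le> card F'" if "F' \<subseteq> Fm" "Zs \<subseteq> fs.span (F' \<union> Bt)" for F'
  proof -
    have "finite F'" using that(1) Fm(1) by (rule finite_subset)
    then have "Q (card F')" unfolding Q_def using that Fm(3) by blast
    then have "(LEAST n. Q n) \<le> card F'" by (rule Least_le)
    then show ?thesis using Fm(2) by simp
  qed
  have indep0: "\<forall>f\<in>Fm. u f = 0" if "(\<Sum>f\<in>Fm. fscale (u f) f) \<in> Bt" for u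
    by (rule min_indep[OF BtS Fm(1) Fm(4) minF that])
  have Findep: "fs.independent Fm"
  proof
    assume "fs.dependent Fm"
    then have "\<exists>u. (\<exists>v\<in>Fm. u v \<noteq> 0) \<and> (\<Sum>v\<in>Fm. fscale (u v) v) = 0"
      by (rule iffD1[OF fs.dependent_finite[OF Fm(1)]])
    then obtain u where u: "\<exists>v\<in>Fm. u v \<noteq> 0" "(\<Sum>v\<in>Fm. fscale (u v) v) = 0" by blast
    have "0 \<in> Bt" by (rule fs.subspace_0[OF BtS])
    then have "\<forall>f\<in>Fm. u f = 0" using u(2) by (intro indep0) simp
    with u(1) show False by blast
  qed
  have dimP0: "fs.dim (fs.span Fm) = (LEAST n. Q n)"
    using fs.dim_span_eq_card_independent[OF Findep] Fm(2) by simp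
  have spanZ: "fs.span Fm \<subseteq> Zs"
    by (rule fs.span_minimal[OF Fm(3)]) (simp add: Zs_def subspace_fcycles)
  have cf0: "compatible_family k X Xs V' E' (fs.span Fm) (\<lambda>_ x. x)"
    unfolding compatible_family_def
  proof (intro conjI ballI)
    show "fs.subspace (fs.span Fm)" by simp
  next
    fix v assume vV: "v \<in> V'"
    show "hlinear_inj k X (Xs v) (fs.span Fm) (\<lambda>x. x)"
      unfolding hlinear_inj_def Let_def
    proof (intro conjI ballI allI impI)
      fix x assume "x \<in> fs.span Fm"
      then show "x \<in> fcycles k (subtopology X (Xs v))" using spanZ Zmono[OF vV] by blast
    next
      fix x y show "x + y - (x + y) \<in> fboundaries k (subtopology X (Xs v))" by (simp add: zeroB)
    next
      fix a x show "fscale a x - fscale a x \<in> fboundaries k (subtopology X (Xs v))" by (simp add: zeroB)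
    next
      fix x y assume x: "x \<in> fs.span Fm" and y: "y \<in> fs.span Fm"
        and xy: "x - y \<in> fboundaries k (subtopology X (Xs v))"
      have d: "x - y \<in> fs.span Fm" using x y by (rule fs.span_diff)
      then obtain u where u: "x - y = (\<Sum>f\<in>Fm. fscale (u f) f)"
        unfolding fs.span_finite[OF Fm(1)] by blast
      have "x - y \<in> Bt" using xy Bmono[OF vV] by blast
      then have "\<forall>f\<in>Fm. u f = 0" unfolding u by (rule indep0)
      then have "x - y = 0" unfolding u by simp
      then show "x = y" by simp
    qed
  next
    fix e assume "e \<in> E'"
    show "case e of (u, v) \<Rightarrow> \<forall>x\<in>fs.span Fm. x - x \<in> fboundaries k (subtopology X (Xs v))"
      by (cases e) (simp add: zeroB)
  qed
  have upper: "fs.dim P' \<le> (LEAST n. Q n)" if cf: "compatible_family k X Xs V' E' P' i'"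
    for P' :: "('a,'k) fchain set" and i'
  proof -
    have subP: "fs.subspace P'" by (rule compD(1)[OF cf])
    have hls: "hlinear_inj k X (Xs s) P' (i' s)" by (rule compD(2)[OF cf sV])
    have hlt: "hlinear_inj k X (Xs t) P' (i' t)" by (rule compD(2)[OF cf tV])
    obtain Bas where Bas: "Bas \<subseteq> P'" "fs.independent Bas" "P' \<subseteq> fs.span Bas" "card Bas = fs.dim P'"
      by (rule fs.basis_exists)
    show ?thesis
    proof (cases "finite Bas")
      case False
      then show ?thesis using Bas(4) by simp
    next
      case finB: True
      have "card Bas \<le> card Fm"
      proof (rule indep_bound[OF BtS Fm(1) finB])
        fix x assume "x \<in> Bas"
        then have "i' s x \<in> Zs" unfolding Zs_def using Bas(1) by (intro hlinD(1)[OF hls]) blast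
        then show "i' s x \<in> fs.span (Fm \<union> Bt)" using Fm(4) by blast
      next
        fix c assume csum: "(\<Sum>x\<in>Bas. fscale (c x) (i' s x)) \<in> Bt"
        define y where "y = (\<Sum>x\<in>Bas. fscale (c x) x)"
        have yP: "y \<in> P'" unfolding y_def
          by (rule fs.subspace_sum[OF subP]) (use Bas(1) in \<open>auto intro: fs.subspace_scale[OF subP]\<close>)
        have "i' s y - (\<Sum>x\<in>Bas. fscale (c x) (i' s x)) \<in> fboundaries k (subtopology X (Xs s))"
          unfolding y_def by (rule hlin_sum[OF hls subP finB]) (use Bas(1) in blast)
        then have a1: "i' s y - (\<Sum>x\<in>Bas. fscale (c x) (i' s x)) \<in> Bt" using Bs by blast
        have "i' s y = (i' s y - (\<Sum>x\<in>Bas. fscale (c x) (i' s x))) + (\<Sum>x\<in>Bas. fscale (c x) (i' s x))"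
          by simp
        also have "\<dots> \<in> Bt" by (rule fs.subspace_add[OF BtS a1 csum])
        finally have sy: "i' s y \<in> Bt" .
        have "i' s y - i' t y \<in> Bt" unfolding BtV
          by (rule reach_diff[OF cf EV _ reach yP]) (use mono in blast)
        then have "i' s y - (i' s y - i' t y) \<in> Bt" by (rule fs.subspace_diff[OF BtS sy])
        then have ty: "i' t y \<in> Bt" by simp
        have t0: "i' t 0 \<in> Bt" unfolding BtV by (rule hlin_zero[OF hlt subP])
        have "i' t y - i' t 0 \<in> Bt" by (rule fs.subspace_diff[OF BtS ty t0])
        moreover have "0 \<in> P'" by (rule fs.subspace_0[OF subP])
        ultimately have "y = 0" using hlinD(4)[OF hlt yP] unfolding BtV by blast
        then have sum0: "(\<Sum>x\<in>Bas. fscale (c x) x) = 0" unfolding y_def .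
        show "\<forall>x\<in>Bas. c x = 0"
        proof (rule ccontr)
          assume "\<not> (\<forall>x\<in>Bas. c x = 0)"
          then have "\<exists>x\<in>Bas. c x \<noteq> 0" by blast
          with sum0 have "\<exists>u. (\<exists>v\<in>Bas. u v \<noteq> 0) \<and> (\<Sum>v\<in>Bas. fscale (u v) v) = 0" by blast
          then have "fs.dependent Bas" by (rule iffD2[OF fs.dependent_finite[OF finB]])
          with Bas(2) show False by simp
        qed
      qed
      then show ?thesis using Bas(4) Fm(2) by simp
    qed
  qed
  show ?thesis
  proof (intro conjI exI allI impI)
    show "persistent_group k X Xs V' E' (fs.span Fm) (\<lambda>_ x. x)"
      unfolding persistent_group_def
    proof (intro conjI allI impI)
      show "compatible_family k X Xs V' E' (fs.span Fm) (\<lambda>_ x. x)" by (rule cf0)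
    next
      fix P' :: "('a,'k) fchain set" and i'
      assume "compatible_family k X Xs V' E' P' i'"
      then have "fs.dim P' \<le> (LEAST n. Q n)" by (rule upper)
      then show "fs.dim P' \<le> fs.dim (fs.span Fm)" using dimP0 by simp
    qed
  next
    fix P :: "('a,'k) fchain set" and ii
    assume pg: "persistent_group k X Xs V' E' P ii"
    have cfP: "compatible_family k X Xs V' E' P ii" using pg unfolding persistent_group_def by (rule conjunct1)
    have "\<forall>(P' :: ('a, 'k) fchain set) i'. compatible_family k X Xs V' E' P' i' \<longrightarrow> fs.dim P' \<le> fs.dim P"
      using pg unfolding persistent_group_def by (rule conjunct2)
    then have "fs.dim (fs.span Fm) \<le> fs.dim P" using cf0 by blast
    moreover have "fs.dim P \<le> (LEAST n. Q n)" by (rule upper[OF cfP])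
    ultimately show "fs.dim P = hrank k X (Xs s) (Xs t) F" using dimP0 r_def by simp
  qed
qed


lemma chain_mono:
  assumes "\<And>j. j < n \<Longrightarrow> Xs j \<subseteq> Xs (Suc j)" "a \<le> b" "b \<le> n"
  shows "Xs a \<subseteq> (Xs b :: 'a set)"
  using assms(2,3)
proof (induction b)
  case 0 then show ?case by simp
next
  case (Suc b)
  show ?case
  proof (cases "a = Suc b")
    case True then show ?thesis by simp
  next
    case False
    then have "a \<le> b" "b < n" using Suc.prems by auto
    then show ?thesis using Suc.IH assms(1)[of b] by force
  qed
qed

lemma path_reach:
  "q \<le> p \<Longrightarrow> (i, i + q) \<in> {(j, Suc j) | j. i \<le> j \<and> j < i + p}\<^sup>*"
proof (induction q)
  case 0 then show ?case by simp
next
  case (Suc q)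
  then have "(i, i + q) \<in> {(j, Suc j) | j. i \<le> j \<and> j < i + p}\<^sup>*" by simp
  moreover have "(i + q, i + Suc q) \<in> {(j, Suc j) | j. i \<le> j \<and> j < i + p}" using Suc.prems by auto
  ultimately show ?case by (rule rtrancl_into_rtrancl)
qed

lemma grid_reach:
  assumes "w \<in> grid d m" "v \<in> grid d m" "u \<le> w" "w \<le> v"
  shows "(w, v) \<in> (box_edges d m u v)\<^sup>*"
  using assms
proof (induction "\<Sum>i<d. v i - w i" arbitrary: w rule: less_induct)
  case less
  show ?case
  proof (cases "w = v")
    case True then show ?thesis by simp
  next
    case False
    then obtain i where i: "w i \<noteq> v i" by (auto simp: fun_eq_iff)
    have wle: "\<And>j. w j \<le> v j" using less.prems(4) by (simp add: le_fun_def)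
    have id: "i < d"
    proof (rule ccontr)
      assume "\<not> i < d"
      then have "w i = 0" "v i = 0" using less.prems(1,2) by (auto simp: grid_def)
      with i show False by simp
    qed
    have lt: "w i < v i" using wle[of i] i by simp
    have vm: "v i \<le> m" using less.prems(2) id by (simp add: grid_def)
    define w' where "w' = w(i := Suc (w i))"
    have w'g: "w' \<in> grid d m" using less.prems(1) id lt vm by (auto simp: grid_def w'_def)
    have uw': "u \<le> w'" using less.prems(3) unfolding le_fun_def w'_def by (metis fun_upd_apply le_Suc_eq)
    have w'v: "w' \<le> v" using wle lt by (auto simp: le_fun_def w'_def)
    have wbox: "w \<in> box_vertices d m u v" using less.prems by (simp add: box_vertices_def)
    have w'box: "w' \<in> box_vertices d m u v" using w'g uw' w'v by (simp add: box_vertices_def)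
    have "(w, w') \<in> grid_edges d m"
      unfolding grid_edges_def w'_def using less.prems(1) id lt vm by auto
    then have e: "(w, w') \<in> box_edges d m u v" using wbox w'box by (simp add: box_edges_def)
    have "(\<Sum>j<d. v j - w' j) < (\<Sum>j<d. v j - w j)"
    proof (rule sum_strict_mono_ex1)
      show "\<forall>j\<in>{..<d}. v j - w' j \<le> v j - w j" by (auto simp: w'_def)
      show "\<exists>j\<in>{..<d}. v j - w' j < v j - w j" using id lt by (intro bexI[of _ i]) (auto simp: w'_def)
    qed simp
    then have "(w', v) \<in> (box_edges d m u v)\<^sup>*" using less.hyps w'g less.prems(2) uw' w'v by blast
    with e show ?thesis by (rule converse_rtrancl_into_rtrancl)
  qed
qed


lemma part1:
  fixes X :: "'a topology" and k :: nat and F :: "'k::field itself" and Xs :: "nat \<Rightarrow> 'a set" and n :: nat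
  shows "graph_filtration X {0..n} (path_edges n) Xs \<and> (\<forall>j\<le>n. fg_homology k X (Xs j) F) \<longrightarrow>
      (\<forall>i p. i + p \<le> n \<longrightarrow>
         (\<exists>(P :: ('a,'k) fchain set) ii. persistent_group k X Xs {i..i+p} {(j, Suc j) | j. i \<le> j \<and> j < i + p} P ii) \<and>
         (\<forall>(P :: ('a,'k) fchain set) ii. persistent_group k X Xs {i..i+p} {(j, Suc j) | j. i \<le> j \<and> j < i + p} P ii \<longrightarrow>
             vector_space.dim fscale P = hrank k X (Xs i) (Xs (i + p)) F)) \<and>
      (PH_module k X Xs {0..n} (path_edges n) :: (nat \<Rightarrow> ('a,'k) fchain set set) \<times> _)
        = std_persistence_module k X Xs n"
proof (rule impI)
  assume H: "graph_filtration X {0..n} (path_edges n) Xs \<and> (\<forall>j\<le>n. fg_homology k X (Xs j) F)"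
  have step: "Xs j \<subseteq> Xs (Suc j)" if "j < n" for j
  proof -
    have "\<forall>(u,w)\<in>path_edges n. u \<in> {0..n} \<and> w \<in> {0..n} \<and> Xs u \<subseteq> Xs w"
      using H unfolding graph_filtration_def by blast
    moreover have "(j, Suc j) \<in> path_edges n" using that by (auto simp: path_edges_def)
    ultimately show ?thesis by fastforce
  qed
  have R: "(\<exists>(P :: ('a,'k) fchain set) ii. persistent_group k X Xs {i..i+p} {(j, Suc j) | j. i \<le> j \<and> j < i + p} P ii) \<and>
         (\<forall>(P :: ('a,'k) fchain set) ii. persistent_group k X Xs {i..i+p} {(j, Suc j) | j. i \<le> j \<and> j < i + p} P ii \<longrightarrow>
             vector_space.dim fscale P = hrank k X (Xs i) (Xs (i + p)) F)" if ip: "i + p \<le> n" for i p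
  proof (rule core)
    show "i \<in> {i..i+p}" "i + p \<in> {i..i+p}" by auto
    show "Xs i \<subseteq> Xs w \<and> Xs w \<subseteq> Xs (i + p)" if "w \<in> {i..i+p}" for w
      using that ip chain_mono[of n Xs, OF step] by auto
    show "{(j, Suc j) | j. i \<le> j \<and> j < i + p} \<subseteq> {i..i+p} \<times> {i..i+p}" by auto
    show "(i, i + p) \<in> {(j, Suc j) | j. i \<le> j \<and> j < i + p}\<^sup>*" by (rule path_reach) simp
    show "fg_homology k X (Xs i) F" using H ip by simp
  qed
  have eq: "(PH_module k X Xs {0..n} (path_edges n) :: (nat \<Rightarrow> ('a,'k) fchain set set) \<times> _)
        = std_persistence_module k X Xs n"
    unfolding PH_module_def std_persistence_module_def path_edges_def
    by (auto simp: fun_eq_iff)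
  show "(\<forall>i p. i + p \<le> n \<longrightarrow>
         (\<exists>(P :: ('a,'k) fchain set) ii. persistent_group k X Xs {i..i+p} {(j, Suc j) | j. i \<le> j \<and> j < i + p} P ii) \<and>
         (\<forall>(P :: ('a,'k) fchain set) ii. persistent_group k X Xs {i..i+p} {(j, Suc j) | j. i \<le> j \<and> j < i + p} P ii \<longrightarrow>
             vector_space.dim fscale P = hrank k X (Xs i) (Xs (i + p)) F)) \<and>
      (PH_module k X Xs {0..n} (path_edges n) :: (nat \<Rightarrow> ('a,'k) fchain set set) \<times> _)
        = std_persistence_module k X Xs n"
    using R eq by blast
qed

lemma part2:
  fixes X :: "'a topology" and k :: nat and F :: "'k::field itself" and Xs :: "nat \<Rightarrow> 'a set"
  shows "graph_filtration X {0..n} (zigzag_edges n dir) Xs \<and> (\<forall>j\<le>n. fg_homology k X (Xs j) F) \<longrightarrow>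
      (PH_module k X Xs {0..n} (zigzag_edges n dir) :: (nat \<Rightarrow> ('a,'k) fchain set set) \<times> _)
        = zigzag_module k X Xs n dir"
  unfolding PH_module_def zigzag_module_def zigzag_edges_def
  by (auto simp: fun_eq_iff)

lemma part3:
  fixes X :: "'a topology" and k :: nat and F :: "'k::field itself" and Xs :: "(nat \<Rightarrow> nat) \<Rightarrow> 'a set"
  shows "multifiltration X d m Xs \<and> (\<forall>v\<in>grid d m. fg_homology k X (Xs v) F) \<longrightarrow>
      (\<forall>u\<in>grid d m. \<forall>v\<in>grid d m. u \<le> v \<longrightarrow>
         (\<exists>(P :: ('a,'k) fchain set) ii. persistent_group k X Xs (box_vertices d m u v) (box_edges d m u v) P ii) \<and>
         (\<forall>(P :: ('a,'k) fchain set) ii. persistent_group k X Xs (box_vertices d m u v) (box_edges d m u v) P ii \<longrightarrow>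
             vector_space.dim fscale P = hrank k X (Xs u) (Xs v) F))"
proof (intro impI ballI)
  fix u v assume H: "multifiltration X d m Xs \<and> (\<forall>v\<in>grid d m. fg_homology k X (Xs v) F)"
    and u: "u \<in> grid d m" and v: "v \<in> grid d m" and uv: "u \<le> v"
  have mf: "\<forall>u\<in>grid d m. \<forall>v\<in>grid d m. u \<le> v \<longrightarrow> Xs u \<subseteq> Xs v"
    using H unfolding multifiltration_def by (rule conjE) (elim conjE)
  show "(\<exists>(P :: ('a,'k) fchain set) ii. persistent_group k X Xs (box_vertices d m u v) (box_edges d m u v) P ii) \<and>
         (\<forall>(P :: ('a,'k) fchain set) ii. persistent_group k X Xs (box_vertices d m u v) (box_edges d m u v) P ii \<longrightarrow>
             vector_space.dim fscale P = hrank k X (Xs u) (Xs v) F)"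
  proof (rule core)
    show "u \<in> box_vertices d m u v" "v \<in> box_vertices d m u v"
      using u v uv by (auto simp: box_vertices_def)
    show "Xs u \<subseteq> Xs w \<and> Xs w \<subseteq> Xs v" if "w \<in> box_vertices d m u v" for w
      using that u v mf unfolding box_vertices_def by blast
    show "box_edges d m u v \<subseteq> box_vertices d m u v \<times> box_vertices d m u v"
      unfolding box_edges_def by auto
    show "(u, v) \<in> (box_edges d m u v)\<^sup>*" by (rule grid_reach[OF u v order_refl uv])
    show "fg_homology k X (Xs u) F" using H u by blast
  qed
qed


theorem proposition1:
  fixes X :: "'a topology" and k :: nat and F :: "'k::field itself"
  shows
  \<comment> \<open>(1) standard persistence\<close>
  "(\<forall>(Xs :: nat \<Rightarrow> 'a set) n.
      graph_filtration X {0..n} (path_edges n) Xs \<and> (\<forall>j\<le>n. fg_homology k X (Xs j) F) \<longrightarrow>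
      (\<forall>i p. i + p \<le> n \<longrightarrow>
         (\<exists>(P :: ('a,'k) fchain set) ii. persistent_group k X Xs {i..i+p} {(j, Suc j) | j. i \<le> j \<and> j < i + p} P ii) \<and>
         (\<forall>(P :: ('a,'k) fchain set) ii. persistent_group k X Xs {i..i+p} {(j, Suc j) | j. i \<le> j \<and> j < i + p} P ii \<longrightarrow>
             vector_space.dim fscale P = hrank k X (Xs i) (Xs (i + p)) F)) \<and>
      (PH_module k X Xs {0..n} (path_edges n) :: (nat \<Rightarrow> ('a,'k) fchain set set) \<times> _)
        = std_persistence_module k X Xs n)
   \<and>
  \<comment> \<open>(2) zigzag persistence\<close>
   (\<forall>(Xs :: nat \<Rightarrow> 'a set) n dir.
      graph_filtration X {0..n} (zigzag_edges n dir) Xs \<and> (\<forall>j\<le>n. fg_homology k X (Xs j) F) \<longrightarrow>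
      (PH_module k X Xs {0..n} (zigzag_edges n dir) :: (nat \<Rightarrow> ('a,'k) fchain set set) \<times> _)
        = zigzag_module k X Xs n dir)
   \<and>
  \<comment> \<open>(3) multidimensional persistence\<close>
   (\<forall>(Xs :: (nat \<Rightarrow> nat) \<Rightarrow> 'a set) d m.
      multifiltration X d m Xs \<and> (\<forall>v\<in>grid d m. fg_homology k X (Xs v) F) \<longrightarrow>
      (\<forall>u\<in>grid d m. \<forall>v\<in>grid d m. u \<le> v \<longrightarrow>
         (\<exists>(P :: ('a,'k) fchain set) ii. persistent_group k X Xs (box_vertices d m u v) (box_edges d m u v) P ii) \<and>
         (\<forall>(P :: ('a,'k) fchain set) ii. persistent_group k X Xs (box_vertices d m u v) (box_edges d m u v) P ii \<longrightarrow>
             vector_space.dim fscale P = hrank k X (Xs u) (Xs v) F)))"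
    by (intro conjI allI; (rule part1 | rule part2 | rule part3))

end
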